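(* Let $F$ be a non-degenerate distribution function with finite second moment belonging to the class NCP, and let $L_2=L_2^{(n)}$ be the partial maxima BLUE of $\theta_2$. Let $m_k=\mathbb{E}[Z_k]$ and $s_k^2=\operatorname{Var}[Z_k]$. Then (i) for every $n\ge2$, \[ \operatorname{Var}[L_2^{(n)}]\le\frac{\theta_2^2}{\sum_{k=1}^{n-1}m_k^2/s_k^2}; \] (ii) $L_2^{(n)}$ is consistent for $\theta_2$ (as $n\to\infty$) if $\sum_{k=1}^\infty m_k^2/s_k^2=+\infty$.
   Context: For unknown $\theta_1\in\mathbb{R}$, $\theta_2>0$, $X_1^*,\dots,X_n^*$ are i.i.d. with distribution function $F((x-\theta_1)/\theta_2)$, $X^*_{j:j}=\max\{X_1^*,\dots,X_j^*\}$. Linear estimators are $\sum_i c_iX^*_{i:i}$ with constant $c_i$; $L_2^{(n)}$ is the linear estimator unbiased for $\theta_2$ for all $(\theta_1,\theta_2)$ with minimum variance. Let $X_1,X_2,\dots$ be i.i.d. from $F$, $X_{k:k}=\max\{X_1,\dots,X_k\}$, and $Z_k=X_{k+1:k+1}-X_{k:k}$, $k\ge1$. $F$ belongs to NCP if $\operatorname{Cov}[Z_i,Z_j]\le0$ for all positive integers $i\ne j$. *)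

theory Defs
  imports "HOL-Probability.Probability"
begin

definition pmax :: "(nat \<Rightarrow> 'a \<Rightarrow> real) \<Rightarrow> nat \<Rightarrow> 'a \<Rightarrow> real" where
  "pmax X k \<omega> = Max ((\<lambda>i. X i \<omega>) ` {1..k})"

definition incr :: "(nat \<Rightarrow> 'a \<Rightarrow> real) \<Rightarrow> nat \<Rightarrow> 'a \<Rightarrow> real" where
  "incr X k \<omega> = pmax X (k + 1) \<omega> - pmax X k \<omega>"

definition (in prob_space) covariance :: "('a \<Rightarrow> real) \<Rightarrow> ('a \<Rightarrow> real) \<Rightarrow> real" where
  "covariance U V = expectation (\<lambda>\<omega>. (U \<omega> - expectation U) * (V \<omega> - expectation V))"

definition (in prob_space) NCP :: "(nat \<Rightarrow> 'a \<Rightarrow> real) \<Rightarrow> bool" where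
  "NCP X \<longleftrightarrow> (\<forall>i j. 1 \<le> i \<longrightarrow> 1 \<le> j \<longrightarrow> i \<noteq> j \<longrightarrow> covariance (incr X i) (incr X j) \<le> 0)"

text \<open>Location-scale sample X*_i = theta1 + theta2 * X_i (X_i with d.f. F, so X*_i has d.f.
  F((x - theta1)/theta2)).\<close>
definition lsc :: "real \<Rightarrow> real \<Rightarrow> (nat \<Rightarrow> 'a \<Rightarrow> real) \<Rightarrow> nat \<Rightarrow> 'a \<Rightarrow> real" where
  "lsc t1 t2 X i \<omega> = t1 + t2 * X i \<omega>"

definition lin_est :: "(nat \<Rightarrow> real) \<Rightarrow> nat \<Rightarrow> real \<Rightarrow> real \<Rightarrow> (nat \<Rightarrow> 'a \<Rightarrow> real) \<Rightarrow> 'a \<Rightarrow> real" where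
  "lin_est c n t1 t2 X \<omega> = (\<Sum>i=1..n. c i * pmax (lsc t1 t2 X) i \<omega>)"

definition (in prob_space) unbiased2 :: "(nat \<Rightarrow> 'a \<Rightarrow> real) \<Rightarrow> nat \<Rightarrow> (nat \<Rightarrow> real) \<Rightarrow> bool" where
  "unbiased2 X n c \<longleftrightarrow> (\<forall>t1 t2. 0 < t2 \<longrightarrow> expectation (lin_est c n t1 t2 X) = t2)"

definition (in prob_space) BLUE2 :: "(nat \<Rightarrow> 'a \<Rightarrow> real) \<Rightarrow> nat \<Rightarrow> (nat \<Rightarrow> real) \<Rightarrow> bool" where
  "BLUE2 X n c \<longleftrightarrow> unbiased2 X n c \<and>
     (\<forall>c'. unbiased2 X n c' \<longrightarrow> (\<forall>t1 t2. 0 < t2 \<longrightarrow>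
        variance (lin_est c n t1 t2 X) \<le> variance (lin_est c' n t1 t2 X)))"

end

theory Submission
  imports Defs
begin


lemma aux_add: "((a::real)+b)\<^sup>2 \<le> 2*a\<^sup>2+2*b\<^sup>2"
proof -
  have "0 \<le> (a-b)\<^sup>2" by simp
  then show ?thesis by (simp add: power2_eq_square algebra_simps)
qed

lemma aux_mult: "\<bar>(a::real)*b\<bar> \<le> a\<^sup>2+b\<^sup>2"
proof -
  have "0 \<le> (\<bar>a\<bar>-\<bar>b\<bar>)\<^sup>2" by simp
  moreover have "0 \<le> \<bar>a\<bar>*\<bar>b\<bar>" by simp
  ultimately have "\<bar>a\<bar> * (\<bar>b\<bar> * 2) \<le> a * a + b * b" "0 \<le> \<bar>a\<bar>*\<bar>b\<bar>"
    by (simp_all add: power2_eq_square algebra_simps abs_mult)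
  then show ?thesis unfolding power2_eq_square abs_mult by linarith
qed

context prob_space begin

lemma sq_int_add:
  fixes f g :: "'a \<Rightarrow> real"
  assumes [measurable]: "f \<in> borel_measurable M" "g \<in> borel_measurable M"
    and "integrable M (\<lambda>x. (f x)\<^sup>2)" "integrable M (\<lambda>x. (g x)\<^sup>2)"
  shows "integrable M (\<lambda>x. (f x + g x)\<^sup>2)"
proof (rule Bochner_Integration.integrable_bound)
  show "integrable M (\<lambda>x. 2 * (f x)\<^sup>2 + 2 * (g x)\<^sup>2)" using assms by auto
  show "AE x in M. norm ((f x + g x)\<^sup>2) \<le> norm (2 * (f x)\<^sup>2 + 2 * (g x)\<^sup>2)"
  proof (intro AE_I2)
    fix x
    show "norm ((f x + g x)\<^sup>2) \<le> norm (2 * (f x)\<^sup>2 + 2 * (g x)\<^sup>2)"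
      using aux_add[of "f x" "g x"] by simp
  qed
qed measurable

lemma sq_int_mult:
  fixes f g :: "'a \<Rightarrow> real"
  assumes [measurable]: "f \<in> borel_measurable M" "g \<in> borel_measurable M"
    and "integrable M (\<lambda>x. (f x)\<^sup>2)" "integrable M (\<lambda>x. (g x)\<^sup>2)"
  shows "integrable M (\<lambda>x. f x * g x)"
proof (rule Bochner_Integration.integrable_bound)
  show "integrable M (\<lambda>x. (f x)\<^sup>2 + (g x)\<^sup>2)" using assms by auto
  show "AE x in M. norm (f x * g x) \<le> norm ((f x)\<^sup>2 + (g x)\<^sup>2)"
  proof (intro AE_I2)
    fix x
    show "norm (f x * g x) \<le> norm ((f x)\<^sup>2 + (g x)\<^sup>2)"
      using aux_mult[of "f x" "g x"] by simp
  qed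
qed measurable

lemma sq_int_max:
  fixes f g :: "'a \<Rightarrow> real"
  assumes [measurable]: "f \<in> borel_measurable M" "g \<in> borel_measurable M"
    and "integrable M (\<lambda>x. (f x)\<^sup>2)" "integrable M (\<lambda>x. (g x)\<^sup>2)"
  shows "integrable M (\<lambda>x. (max (f x) (g x))\<^sup>2)"
proof (rule Bochner_Integration.integrable_bound)
  show "integrable M (\<lambda>x. (f x)\<^sup>2 + (g x)\<^sup>2)" using assms by auto
  show "AE x in M. norm ((max (f x) (g x))\<^sup>2) \<le> norm ((f x)\<^sup>2 + (g x)\<^sup>2)"
    by (auto simp: max_def intro!: AE_I2)
qed measurable

lemma sq_int_integrable:
  fixes f :: "'a \<Rightarrow> real"
  assumes [measurable]: "f \<in> borel_measurable M" and "integrable M (\<lambda>x. (f x)\<^sup>2)"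
  shows "integrable M f"
proof (rule Bochner_Integration.integrable_bound)
  show "integrable M (\<lambda>x. 1 + (f x)\<^sup>2)" using assms by auto
  show "AE x in M. norm (f x) \<le> norm (1 + (f x)\<^sup>2)"
  proof (intro AE_I2)
    fix x
    have "0 \<le> (\<bar>f x\<bar> - 1)\<^sup>2" by simp
    then show "norm (f x) \<le> norm (1 + (f x)\<^sup>2)"
      by (simp add: power2_eq_square algebra_simps) 
  qed
qed measurable

lemma sq_int_cmult:
  fixes f :: "'a \<Rightarrow> real"
  assumes "integrable M (\<lambda>x. (f x)\<^sup>2)"
  shows "integrable M (\<lambda>x. (c * f x)\<^sup>2)"
  using integrable_mult_right[OF assms, of "c\<^sup>2"] by (simp add: power_mult_distrib)

lemma sq_int_const: "integrable M (\<lambda>x. (c::real)\<^sup>2)" by simp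

end


lemma pmax_1: "pmax X 1 \<omega> = X 1 \<omega>"
  by (simp add: pmax_def)

lemma pmax_Suc0[simp]: "pmax X (Suc 0) \<omega> = X (Suc 0) \<omega>"
  by (simp add: pmax_def)

lemma pmax_Suc: "1 \<le> k \<Longrightarrow> pmax X (Suc k) \<omega> = max (pmax X k \<omega>) (X (Suc k) \<omega>)"
proof -
  assume k: "1 \<le> k"
  have "{1..Suc k} = insert (Suc k) {1..k}" by auto
  then have "(\<lambda>i. X i \<omega>) ` {1..Suc k} = insert (X (Suc k) \<omega>) ((\<lambda>i. X i \<omega>) ` {1..k})" by auto
  moreover have "(\<lambda>i. X i \<omega>) ` {1..k} \<noteq> {}" using k by auto
  ultimately show ?thesis unfolding pmax_def by (simp add: max.commute)
qed

lemma pmax_lsc: assumes "0 < t2" "1 \<le> k" shows "pmax (lsc t1 t2 X) k \<omega> = t1 + t2 * pmax X k \<omega>"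
  using assms(2)
proof (induction k rule: dec_induct)
  case base
  then show ?case by (simp add: pmax_1 lsc_def)
next
  case (step k)
  have "max (t1 + t2 * pmax X k \<omega>) (t1 + t2 * X (Suc k) \<omega>) = t1 + t2 * max (pmax X k \<omega>) (X (Suc k) \<omega>)"
    using \<open>0 < t2\<close> by (auto simp: max_def)
  then show ?case using step by (simp add: pmax_Suc lsc_def)
qed

lemma incr_nonneg: "1 \<le> k \<Longrightarrow> 0 \<le> incr X k \<omega>"
  by (simp add: incr_def pmax_Suc)

lemma telescope:
  fixes d P :: "nat \<Rightarrow> real"
  assumes "1 \<le> n"
  shows "(\<Sum>i=1..n. (d (i-1) - d i) * P i) = d 0 * P 1 - d n * P n + (\<Sum>k=1..n-1. d k * (P (k+1) - P k))"
  using assms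
proof (induction n rule: dec_induct)
  case base
  then show ?case by (simp add: algebra_simps)
next
  case (step n)
  have "{1..Suc n - 1} = insert n {1..n-1}" using step by auto
  then have "(\<Sum>k=1..Suc n-1. d k * (P (k+1) - P k)) = d n * (P (n+1) - P n) + (\<Sum>k=1..n-1. d k * (P (k+1) - P k))"
    using step by simp
  then show ?case using step by (simp add: algebra_simps)
qed

context prob_space begin

lemma pmax_sq:
  assumes rv: "\<And>i. X i \<in> borel_measurable M"
    and sq: "\<And>i. 1 \<le> i \<Longrightarrow> integrable M (\<lambda>\<omega>. (X i \<omega>)\<^sup>2)"
    and k: "1 \<le> k"
  shows "pmax X k \<in> borel_measurable M \<and> integrable M (\<lambda>\<omega>. (pmax X k \<omega>)\<^sup>2)"
  using k
proof (induction k rule: dec_induct)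
  case base
  have "pmax X 1 = X 1" by (simp add: fun_eq_iff pmax_1)
  then show ?case using rv[of 1] sq[of 1] by simp
next
  case (step k)
  then have [measurable]: "pmax X k \<in> borel_measurable M" by simp
  have [measurable]: "X (Suc k) \<in> borel_measurable M" by (rule rv)
  have e: "pmax X (Suc k) = (\<lambda>\<omega>. max (pmax X k \<omega>) (X (Suc k) \<omega>))"
    using step by (simp add: pmax_Suc fun_eq_iff)
  show ?case unfolding e using step sq[of "Suc k"]
    by (auto intro!: sq_int_max)
qed

lemma incr_sq:
  assumes rv: "\<And>i. X i \<in> borel_measurable M"
    and sq: "\<And>i. 1 \<le> i \<Longrightarrow> integrable M (\<lambda>\<omega>. (X i \<omega>)\<^sup>2)"
    and k: "1 \<le> k"
  shows "incr X k \<in> borel_measurable M \<and> integrable M (\<lambda>\<omega>. (incr X k \<omega>)\<^sup>2)"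
proof -
  have [measurable]: "pmax X k \<in> borel_measurable M" "pmax X (k+1) \<in> borel_measurable M"
    using pmax_sq[OF rv sq, where k=k] pmax_sq[OF rv sq, where k="k+1"] k by auto
  have "integrable M (\<lambda>\<omega>. (pmax X (k+1) \<omega> + (-1) * pmax X k \<omega>)\<^sup>2)"
    using pmax_sq[OF rv sq, where k=k] pmax_sq[OF rv sq, where k="k+1"] k
    by (intro sq_int_add sq_int_cmult) auto
  moreover have "incr X k \<in> borel_measurable M" unfolding incr_def[abs_def] by measurable
  ultimately show ?thesis by (simp add: incr_def[abs_def])
qed

end


context prob_space begin

lemma same_dist_sq:
  fixes X Y :: "'a \<Rightarrow> real"
  assumes [measurable]: "X \<in> borel_measurable M" "Y \<in> borel_measurable M"
    and cdfeq: "\<And>x. prob {\<omega> \<in> space M. X \<omega> \<le> x} = prob {\<omega> \<in> space M. Y \<omega> \<le> x}"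
    and sq: "integrable M (\<lambda>\<omega>. (Y \<omega>)\<^sup>2)"
  shows "integrable M (\<lambda>\<omega>. (X \<omega>)\<^sup>2)"
proof -
  have pre: "\<And>Z x. {\<omega> \<in> space M. Z \<omega> \<le> x} = Z -` {..x} \<inter> space M" by auto
  have "cdf (distr M borel X) = cdf (distr M borel Y)"
  proof
    fix x
    show "cdf (distr M borel X) x = cdf (distr M borel Y) x"
      unfolding cdf_def using cdfeq[of x] by (simp add: measure_distr pre)
  qed
  then have eq: "distr M borel X = distr M borel Y"
    by (intro cdf_unique) auto
  have "integrable (distr M borel Y) (\<lambda>x. x\<^sup>2)"
    using sq by (subst integrable_distr_eq) auto
  then have "integrable (distr M borel X) (\<lambda>x. x\<^sup>2)" using eq by simp
  then show ?thesis by (subst (asm) integrable_distr_eq) auto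
qed

lemma AE_pos_exists:
  assumes "AE x in M. P x" "A \<in> events" "prob A \<noteq> 0"
  shows "\<exists>x\<in>A. P x"
proof (rule ccontr)
  assume "\<not> ?thesis"
  then have "AE x in M. x \<notin> A" using assms(1) by (auto elim: AE_mp)
  then have "A \<in> null_sets M" using assms(2) by (simp add: AE_iff_null_sets)
  then have "prob A = 0" by (auto simp: measure_def null_sets_def)
  then show False using assms(3) by simp
qed

lemma Z1_nonconst:
  assumes [measurable]: "X 1 \<in> borel_measurable M" "X 2 \<in> borel_measurable M"
    and indep: "indep_vars (\<lambda>_. borel) X {1..}"
    and F1: "prob {\<omega> \<in> space M. X 1 \<omega> \<le> x} = F x"
    and F2: "prob {\<omega> \<in> space M. X 2 \<omega> \<le> x} = F x"
    and Fx: "0 < F x" "F x < 1"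
  shows "\<not> (AE \<omega> in M. incr X 1 \<omega> = c)"
proof
  assume ae: "AE \<omega> in M. incr X 1 \<omega> = c"
  have ind: "\<And>a b. {a, b} \<subseteq> {1::nat..} \<Longrightarrow> a \<noteq> b \<Longrightarrow>
     prob (X a -` {..x} \<inter> space M \<inter> (X b -` {x<..} \<inter> space M)) =
     prob (X a -` {..x} \<inter> space M) * prob (X b -` {x<..} \<inter> space M)"
  proof -
    fix a b :: nat assume ab: "{a, b} \<subseteq> {1..}" "a \<noteq> b"
    have "prob (\<Inter>i\<in>{a,b}. X i -` (if i = a then {..x} else {x<..}) \<inter> space M) =
      (\<Prod>i\<in>{a,b}. prob (X i -` (if i = a then {..x} else {x<..}) \<inter> space M))"
      by (rule indep_varsD[OF indep]) (use ab in auto)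
    then show "prob (X a -` {..x} \<inter> space M \<inter> (X b -` {x<..} \<inter> space M)) =
     prob (X a -` {..x} \<inter> space M) * prob (X b -` {x<..} \<inter> space M)"
      using ab by simp
  qed
  have pre: "\<And>i. X i -` {..x} \<inter> space M = {\<omega> \<in> space M. X i \<omega> \<le> x}" by auto
  have cpl: "\<And>i. X i \<in> borel_measurable M \<Longrightarrow> prob (X i -` {x<..} \<inter> space M) = 1 - prob {\<omega> \<in> space M. X i \<omega> \<le> x}"
  proof -
    fix i assume [measurable]: "X i \<in> borel_measurable M"
    have "X i -` {x<..} \<inter> space M = space M - {\<omega> \<in> space M. X i \<omega> \<le> x}" by auto
    then show "prob (X i -` {x<..} \<inter> space M) = 1 - prob {\<omega> \<in> space M. X i \<omega> \<le> x}"
      by (simp add: prob_compl)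
  qed
  have A: "prob (X 2 -` {..x} \<inter> space M \<inter> (X 1 -` {x<..} \<inter> space M)) \<noteq> 0"
    using ind[of 2 1] cpl[of 1, OF assms(1)] Fx F1 F2 by (simp add: pre)
  have B: "prob (X 1 -` {..x} \<inter> space M \<inter> (X 2 -` {x<..} \<inter> space M)) \<noteq> 0"
    using ind[of 1 2] cpl[of 2, OF assms(2)] Fx F1 F2 by (simp add: pre)
  have evA: "X 2 -` {..x} \<inter> space M \<inter> (X 1 -` {x<..} \<inter> space M) \<in> events"
    by (rule sets.Int[OF measurable_sets[OF assms(2)] measurable_sets[OF assms(1)]]) auto
  have evB: "X 1 -` {..x} \<inter> space M \<inter> (X 2 -` {x<..} \<inter> space M) \<in> events"
    by (rule sets.Int[OF measurable_sets[OF assms(1)] measurable_sets[OF assms(2)]]) auto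
  obtain \<omega> where w: "\<omega> \<in> X 2 -` {..x} \<inter> space M \<inter> (X 1 -` {x<..} \<inter> space M)" "incr X 1 \<omega> = c"
    using AE_pos_exists[OF ae evA A] by auto
  obtain \<omega>' where w': "\<omega>' \<in> X 1 -` {..x} \<inter> space M \<inter> (X 2 -` {x<..} \<inter> space M)" "incr X 1 \<omega>' = c"
    using AE_pos_exists[OF ae evB B] by auto
  have "incr X 1 \<omega> = 0" using w(1) by (auto simp: incr_def pmax_Suc numeral_2_eq_2)
  moreover have "incr X 1 \<omega>' > 0" using w'(1) by (auto simp: incr_def pmax_Suc numeral_2_eq_2)
  ultimately show False using w w' by simp
qed

end


context prob_space begin

lemma var_sum:
  fixes Z :: "nat \<Rightarrow> 'a \<Rightarrow> real"
  assumes rv: "\<And>k. k \<in> I \<Longrightarrow> Z k \<in> borel_measurable M"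
    and sq: "\<And>k. k \<in> I \<Longrightarrow> integrable M (\<lambda>\<omega>. (Z k \<omega>)\<^sup>2)"
    and fin: "finite I"
  shows "variance (\<lambda>\<omega>. \<Sum>k\<in>I. d k * Z k \<omega>) =
    (\<Sum>j\<in>I. \<Sum>k\<in>I. d j * d k * covariance (Z j) (Z k))"
proof -
  have int: "\<And>k. k \<in> I \<Longrightarrow> integrable M (Z k)"
    using rv sq by (rule sq_int_integrable)
  have E: "expectation (\<lambda>\<omega>. \<Sum>k\<in>I. d k * Z k \<omega>) = (\<Sum>k\<in>I. d k * expectation (Z k))"
    using int by (simp add: integral_sum)
  define W where "W k \<omega> = Z k \<omega> - expectation (Z k)" for k \<omega>
  have Wrv: "\<And>k. k \<in> I \<Longrightarrow> W k \<in> borel_measurable M"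
    unfolding W_def[abs_def] using rv by measurable
  have Wsq: "\<And>k. k \<in> I \<Longrightarrow> integrable M (\<lambda>\<omega>. (W k \<omega>)\<^sup>2)"
  proof -
    fix k assume k: "k \<in> I"
    have [measurable]: "Z k \<in> borel_measurable M" using rv k .
    have "integrable M (\<lambda>\<omega>. (Z k \<omega> + (\<lambda>_. - expectation (Z k)) \<omega>)\<^sup>2)"
      by (rule sq_int_add) (use sq k in auto)
    then show "integrable M (\<lambda>\<omega>. (W k \<omega>)\<^sup>2)" by (simp add: W_def)
  qed
  have pt: "\<And>\<omega>. ((\<Sum>k\<in>I. d k * Z k \<omega>) - expectation (\<lambda>\<omega>. \<Sum>k\<in>I. d k * Z k \<omega>))\<^sup>2
     = (\<Sum>j\<in>I. \<Sum>k\<in>I. d j * d k * (W j \<omega> * W k \<omega>))"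
  proof -
    fix \<omega>
    have "(\<Sum>k\<in>I. d k * Z k \<omega>) - expectation (\<lambda>\<omega>. \<Sum>k\<in>I. d k * Z k \<omega>) = (\<Sum>k\<in>I. d k * W k \<omega>)"
      unfolding E W_def by (simp add: sum_subtractf algebra_simps)
    then show "((\<Sum>k\<in>I. d k * Z k \<omega>) - expectation (\<lambda>\<omega>. \<Sum>k\<in>I. d k * Z k \<omega>))\<^sup>2
     = (\<Sum>j\<in>I. \<Sum>k\<in>I. d j * d k * (W j \<omega> * W k \<omega>))"
      by (simp add: power2_eq_square sum_product algebra_simps)
  qed
  have iprod: "\<And>j k. j \<in> I \<Longrightarrow> k \<in> I \<Longrightarrow> integrable M (\<lambda>\<omega>. W j \<omega> * W k \<omega>)"
    using Wrv Wsq by (intro sq_int_mult) auto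
  have "variance (\<lambda>\<omega>. \<Sum>k\<in>I. d k * Z k \<omega>) = integral\<^sup>L M (\<lambda>\<omega>. \<Sum>j\<in>I. \<Sum>k\<in>I. d j * d k * (W j \<omega> * W k \<omega>))"
    by (simp only: pt)
  also have "\<dots> = (\<Sum>j\<in>I. \<Sum>k\<in>I. d j * d k * integral\<^sup>L M (\<lambda>\<omega>. W j \<omega> * W k \<omega>))"
    using iprod by (simp add: integral_sum)
  also have "\<dots> = (\<Sum>j\<in>I. \<Sum>k\<in>I. d j * d k * covariance (Z j) (Z k))"
    by (simp add: covariance_def W_def)
  finally show ?thesis .
qed

lemma covariance_self: "covariance U U = variance U"
  by (simp add: covariance_def power2_eq_square)

lemma var_sum_bound:
  fixes Z :: "nat \<Rightarrow> 'a \<Rightarrow> real"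
  assumes rv: "\<And>k. k \<in> I \<Longrightarrow> Z k \<in> borel_measurable M"
    and sq: "\<And>k. k \<in> I \<Longrightarrow> integrable M (\<lambda>\<omega>. (Z k \<omega>)\<^sup>2)"
    and fin: "finite I"
    and cov: "\<And>j k. j \<in> I \<Longrightarrow> k \<in> I \<Longrightarrow> j \<noteq> k \<Longrightarrow> covariance (Z j) (Z k) \<le> 0"
    and dnn: "\<And>k. k \<in> I \<Longrightarrow> 0 \<le> d k"
  shows "variance (\<lambda>\<omega>. \<Sum>k\<in>I. d k * Z k \<omega>) \<le> (\<Sum>k\<in>I. (d k)\<^sup>2 * variance (Z k))"
proof -
  have "variance (\<lambda>\<omega>. \<Sum>k\<in>I. d k * Z k \<omega>) = (\<Sum>j\<in>I. \<Sum>k\<in>I. d j * d k * covariance (Z j) (Z k))"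
    by (rule var_sum[OF rv sq fin])
  also have "\<dots> \<le> (\<Sum>j\<in>I. (d j)\<^sup>2 * variance (Z j))"
  proof (rule sum_mono)
    fix j assume j: "j \<in> I"
    have "(\<Sum>k\<in>I. d j * d k * covariance (Z j) (Z k)) =
       d j * d j * covariance (Z j) (Z j) + (\<Sum>k\<in>I - {j}. d j * d k * covariance (Z j) (Z k))"
      using j fin by (simp add: sum.remove)
    also have "(\<Sum>k\<in>I - {j}. d j * d k * covariance (Z j) (Z k)) \<le> 0"
      using j dnn cov by (intro sum_nonpos mult_nonneg_nonpos) auto
    finally show "(\<Sum>k\<in>I. d j * d k * covariance (Z j) (Z k)) \<le> (d j)\<^sup>2 * variance (Z j)"
      by (simp add: covariance_self power2_eq_square)
  qed
  finally show ?thesis .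
qed

end


context prob_space begin

lemma sq_int_sum:
  fixes f :: "nat \<Rightarrow> 'a \<Rightarrow> real"
  assumes "finite I" "\<And>i. i \<in> I \<Longrightarrow> f i \<in> borel_measurable M \<and> integrable M (\<lambda>\<omega>. (f i \<omega>)\<^sup>2)"
  shows "(\<lambda>\<omega>. \<Sum>i\<in>I. f i \<omega>) \<in> borel_measurable M \<and> integrable M (\<lambda>\<omega>. (\<Sum>i\<in>I. f i \<omega>)\<^sup>2)"
  using assms
proof (induction I rule: finite_induct)
  case empty
  then show ?case by simp
next
  case (insert a I)
  then have h: "(\<lambda>\<omega>. \<Sum>i\<in>I. f i \<omega>) \<in> borel_measurable M" "integrable M (\<lambda>\<omega>. (\<Sum>i\<in>I. f i \<omega>)\<^sup>2)"
    "f a \<in> borel_measurable M" "integrable M (\<lambda>\<omega>. (f a \<omega>)\<^sup>2)" by auto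
  have "integrable M (\<lambda>\<omega>. (f a \<omega> + (\<Sum>i\<in>I. f i \<omega>))\<^sup>2)"
    by (rule sq_int_add[OF h(3) h(1) h(4) h(2)])
  moreover have "(\<lambda>\<omega>. f a \<omega> + (\<Sum>i\<in>I. f i \<omega>)) \<in> borel_measurable M"
    using h by measurable
  ultimately show ?case using insert by simp
qed

end

theorem lemma5p1:
  fixes M :: "'a measure" and X :: "nat \<Rightarrow> 'a \<Rightarrow> real" and F :: "real \<Rightarrow> real"
  assumes "prob_space M"
    and rv: "\<And>i. X i \<in> borel_measurable M"
    and indep: "prob_space.indep_vars M (\<lambda>_. borel) X {1..}"
    and df: "\<And>i x. 1 \<le> i \<Longrightarrow> measure M {\<omega> \<in> space M. X i \<omega> \<le> x} = F x"
    and nondeg: "\<exists>x. 0 < F x \<and> F x < 1"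
    and moment2: "integrable M (\<lambda>\<omega>. (X 1 \<omega>)\<^sup>2)"
    and ncp: "prob_space.NCP M X"
  defines "m \<equiv> (\<lambda>k. prob_space.expectation M (incr X k))"
    and "s2 \<equiv> (\<lambda>k. prob_space.variance M (incr X k))"
  shows "(\<forall>n c t1 t2. 2 \<le> n \<longrightarrow> prob_space.BLUE2 M X n c \<longrightarrow> 0 < t2 \<longrightarrow>
            prob_space.variance M (lin_est c n t1 t2 X)
              \<le> t2\<^sup>2 / (\<Sum>k=1..n-1. (m k)\<^sup>2 / s2 k)) \<and>
         (filterlim (\<lambda>N. \<Sum>k=1..N. (m k)\<^sup>2 / s2 k) at_top sequentially \<longrightarrow>
          (\<forall>C t1 t2. (\<forall>n\<ge>2. prob_space.BLUE2 M X n (C n)) \<longrightarrow> 0 < t2 \<longrightarrow>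
            (\<forall>\<epsilon>>0. (\<lambda>n. measure M {\<omega> \<in> space M. \<bar>lin_est (C n) n t1 t2 X \<omega> - t2\<bar> > \<epsilon>})
                    \<longlonglongrightarrow> 0)))"
proof -
  interpret prob_space M by fact
  have sq: "integrable M (\<lambda>\<omega>. (X i \<omega>)\<^sup>2)" if "1 \<le> i" for i
    using same_dist_sq[OF rv rv _ moment2, of i] df[OF that] df[of 1] by simp
  have Zrv: "incr X k \<in> borel_measurable M" and Zsq: "integrable M (\<lambda>\<omega>. (incr X k \<omega>)\<^sup>2)"
    if "1 \<le> k" for k using incr_sq[OF rv sq that] by auto
  have Pi: "pmax X k \<in> borel_measurable M" "integrable M (\<lambda>\<omega>. (pmax X k \<omega>)\<^sup>2)"
    if "1 \<le> k" for k using pmax_sq[OF rv sq that] by auto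
  have Zint: "integrable M (incr X k)" if "1 \<le> k" for k
    using Zrv[OF that] Zsq[OF that] by (rule sq_int_integrable)
  have m_nn: "0 \<le> m k" if "1 \<le> k" for k
    unfolding m_def using incr_nonneg[OF that, of X] by (intro Bochner_Integration.integral_nonneg) auto
  have s2_nn: "0 \<le> s2 k" for k unfolding s2_def by (simp add: integral_nonneg)
  obtain x0 where x0: "0 < F x0" "F x0 < 1" using nondeg by auto
  have nc: "\<not> (AE \<omega> in M. incr X 1 \<omega> = c)" for c
    by (rule Z1_nonconst[where F=F and x=x0, OF rv[of 1] rv[of 2] indep df[of 1] df[of 2] x0]) auto
  have m1: "m 1 > 0"
  proof -
    have "m 1 \<noteq> 0"
    proof
      assume "m 1 = 0"
      then have "AE \<omega> in M. incr X 1 \<omega> = 0" unfolding m_def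
        using integral_nonneg_eq_0_iff_AE[OF Zint[of 1]] incr_nonneg[of 1 X] by auto
      then show False using nc by blast
    qed
    then show ?thesis using m_nn[of 1] by simp
  qed
  have s21: "s2 1 > 0"
  proof -
    have "s2 1 \<noteq> 0"
    proof
      assume "s2 1 = 0"
      have [measurable]: "incr X 1 \<in> borel_measurable M" using Zrv[of 1] by simp
      have "integrable M (\<lambda>\<omega>. (incr X 1 \<omega> + (\<lambda>_. - m 1) \<omega>)\<^sup>2)"
        by (rule sq_int_add) (use Zsq[of 1] Zrv[of 1] in auto)
      then have "integrable M (\<lambda>\<omega>. (incr X 1 \<omega> - m 1)\<^sup>2)" by simp
      then have "AE \<omega> in M. (incr X 1 \<omega> - m 1)\<^sup>2 = 0"
        using integral_nonneg_eq_0_iff_AE[of M "\<lambda>\<omega>. (incr X 1 \<omega> - m 1)\<^sup>2"] \<open>s2 1 = 0\<close>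
        unfolding s2_def m_def by auto
      then have "AE \<omega> in M. incr X 1 \<omega> = m 1" by (auto elim: AE_mp)
      then show False using nc by blast
    qed
    then show ?thesis using s2_nn[of 1] by simp
  qed
  define S where "S n = (\<Sum>k=1..n-1. (m k)\<^sup>2 / s2 k)" for n
  have Spos: "S n > 0" if "2 \<le> n" for n
  proof -
    have "S n = (m 1)\<^sup>2 / s2 1 + (\<Sum>k\<in>{1..n-1} - {1}. (m k)\<^sup>2 / s2 k)"
      unfolding S_def using that by (subst sum.remove[of _ 1]) auto
    moreover have "(\<Sum>k\<in>{1..n-1} - {1}. (m k)\<^sup>2 / s2 k) \<ge> 0"
      using s2_nn by (intro sum_nonneg) auto
    moreover have "(m 1)\<^sup>2 / s2 1 > 0" using m1 s21 by simp
    ultimately show ?thesis by linarith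
  qed
  have key: "\<exists>c'. unbiased2 X n c' \<and> (\<forall>t1 t2. 0 < t2 \<longrightarrow> variance (lin_est c' n t1 t2 X) \<le> t2\<^sup>2 / S n)"
    if n2: "2 \<le> n" for n
  proof -
    define I where "I = {1..n-1}"
    define w where "w k = m k / s2 k" for k
    define d where "d k = (if k \<in> I then w k / S n else 0)" for k
    define c' where "c' i = d (i-1) - d i" for i
    have d0: "d 0 = 0" "d n = 0" unfolding d_def I_def by auto
    have finI: "finite I" unfolding I_def by simp
    have I1: "k \<in> I \<Longrightarrow> 1 \<le> k" for k unfolding I_def by auto
    have dnn: "0 \<le> d k" if "k \<in> I" for k
      using that Spos[OF n2] m_nn[OF I1[OF that]] s2_nn[of k] unfolding d_def w_def by simp
    have form: "lin_est c' n t1 t2 X \<omega> = (\<Sum>k\<in>I. (t2 * d k) * incr X k \<omega>)" if t2: "0 < t2" for t1 t2 \<omega>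
    proof -
      have "lin_est c' n t1 t2 X \<omega> = (\<Sum>i=1..n. c' i * (t1 + t2 * pmax X i \<omega>))"
        unfolding lin_est_def
      proof (rule sum.cong)
        fix i assume "i \<in> {1..n}"
        then show "c' i * pmax (lsc t1 t2 X) i \<omega> = c' i * (t1 + t2 * pmax X i \<omega>)"
        proof -
          have "pmax (lsc t1 t2 X) i \<omega> = t1 + t2 * pmax X i \<omega>"
            by (rule pmax_lsc) (use t2 \<open>i \<in> {1..n}\<close> in auto)
          then show ?thesis by simp
        qed
      qed simp
      also have "\<dots> = t1 * (\<Sum>i=1..n. (d (i-1) - d i) * 1) + t2 * (\<Sum>i=1..n. (d (i-1) - d i) * pmax X i \<omega>)"
      proof -
        have "(\<Sum>i=1..n. c' i * (t1 + t2 * pmax X i \<omega>)) =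
          (\<Sum>i=1..n. t1 * ((d (i-1) - d i) * 1) + t2 * ((d (i-1) - d i) * pmax X i \<omega>))"
          by (intro sum.cong) (simp_all add: c'_def algebra_simps)
        then show ?thesis by (simp only: sum.distrib sum_distrib_left)
      qed
      also have "(\<Sum>i=1..n. (d (i-1) - d i) * 1) = 0"
        using telescope[of n d "\<lambda>_. 1"] n2 d0 by simp
      also have "(\<Sum>i=1..n. (d (i-1) - d i) * pmax X i \<omega>) = (\<Sum>k\<in>I. d k * incr X k \<omega>)"
        using telescope[of n d "\<lambda>i. pmax X i \<omega>"] n2 d0 by (simp add: I_def incr_def)
      finally show ?thesis by (simp add: sum_distrib_left algebra_simps)
    qed
    have formf: "lin_est c' n t1 t2 X = (\<lambda>\<omega>. \<Sum>k\<in>I. (t2 * d k) * incr X k \<omega>)" if t2: "0 < t2" for t1 t2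
      using form[OF t2] by (intro ext) simp
    have sumdm: "(\<Sum>k\<in>I. d k * m k) = 1"
    proof -
      have "(\<Sum>k\<in>I. d k * m k) = (\<Sum>k\<in>I. (m k)\<^sup>2 / s2 k) / S n"
        unfolding d_def w_def by (simp add: sum_divide_distrib power2_eq_square)
      also have "\<dots> = 1" using Spos[OF n2] by (simp add: S_def I_def)
      finally show ?thesis .
    qed
    have E: "expectation (lin_est c' n t1 t2 X) = t2" if t2: "0 < t2" for t1 t2
    proof -
      have "expectation (lin_est c' n t1 t2 X) = expectation (\<lambda>\<omega>. \<Sum>k\<in>I. (t2 * d k) * incr X k \<omega>)"
        using formf[OF t2] by simp
      also have "\<dots> = (\<Sum>k\<in>I. (t2 * d k) * m k)"
        using Zint I1 unfolding m_def by (simp add: integral_sum)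
      also have "\<dots> = t2 * (\<Sum>k\<in>I. d k * m k)" by (simp add: sum_distrib_left algebra_simps)
      finally show ?thesis using sumdm by simp
    qed
    have V: "variance (lin_est c' n t1 t2 X) \<le> t2\<^sup>2 / S n" if t2: "0 < t2" for t1 t2
    proof -
      have "variance (lin_est c' n t1 t2 X) = variance (\<lambda>\<omega>. \<Sum>k\<in>I. (t2 * d k) * incr X k \<omega>)"
        using formf[OF t2] by simp
      also have "\<dots> \<le> (\<Sum>k\<in>I. (t2 * d k)\<^sup>2 * variance (incr X k))"
      proof (rule var_sum_bound)
        show "\<And>k. k \<in> I \<Longrightarrow> incr X k \<in> borel_measurable M" using Zrv I1 by auto
        show "\<And>k. k \<in> I \<Longrightarrow> integrable M (\<lambda>\<omega>. (incr X k \<omega>)\<^sup>2)" using Zsq I1 by auto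
        show "finite I" by (rule finI)
        show "\<And>j k. j \<in> I \<Longrightarrow> k \<in> I \<Longrightarrow> j \<noteq> k \<Longrightarrow> covariance (incr X j) (incr X k) \<le> 0"
          using ncp I1 unfolding NCP_def by auto
        show "\<And>k. k \<in> I \<Longrightarrow> 0 \<le> t2 * d k" using dnn t2 by simp
      qed
      also have "\<dots> = t2\<^sup>2 * (\<Sum>k\<in>I. (m k)\<^sup>2 / s2 k) / (S n)\<^sup>2"
      proof -
        have "(t2 * d k)\<^sup>2 * variance (incr X k) = t2\<^sup>2 * ((m k)\<^sup>2 / s2 k) / (S n)\<^sup>2" if "k \<in> I" for k
        proof (cases "s2 k = 0")
          case True
          then show ?thesis using that by (simp add: d_def w_def s2_def)
        next
          case False
          have vk: "variance (incr X k) = s2 k" by (simp add: s2_def)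
          show ?thesis unfolding vk using that False Spos[OF n2]
            by (simp add: d_def w_def power2_eq_square field_simps)
        qed
        then show ?thesis by (simp add: sum_distrib_left sum_divide_distrib)
      qed
      also have "\<dots> = t2\<^sup>2 / S n" using Spos[OF n2] by (simp add: S_def I_def power2_eq_square)
      finally show ?thesis .
    qed
    show ?thesis
      using E V by (intro exI[of _ c']) (simp add: unbiased2_def del: E)
  qed
  have part1: "variance (lin_est c n t1 t2 X) \<le> t2\<^sup>2 / S n"
    if hyp: "2 \<le> n" "BLUE2 X n c" "0 < t2" for n c t1 t2
  proof -
    obtain c' where c': "unbiased2 X n c'" "\<And>t1 t2. 0 < t2 \<Longrightarrow> variance (lin_est c' n t1 t2 X) \<le> t2\<^sup>2 / S n"
      using key[OF hyp(1)] by blast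
    have "variance (lin_est c n t1 t2 X) \<le> variance (lin_est c' n t1 t2 X)"
      using hyp(2,3) c'(1) unfolding BLUE2_def by blast
    also have "\<dots> \<le> t2\<^sup>2 / S n" using c'(2) hyp(3) by blast
    finally show ?thesis .
  qed
  have lsq: "lin_est c n t1 t2 X \<in> borel_measurable M \<and> integrable M (\<lambda>\<omega>. (lin_est c n t1 t2 X \<omega>)\<^sup>2)"
    if t2: "0 < t2" for c n t1 t2
  proof -
    have eq: "lin_est c n t1 t2 X = (\<lambda>\<omega>. \<Sum>i\<in>{1..n}. c i * t1 + (c i * t2) * pmax X i \<omega>)"
    proof (intro ext)
      fix \<omega>
      show "lin_est c n t1 t2 X \<omega> = (\<Sum>i\<in>{1..n}. c i * t1 + (c i * t2) * pmax X i \<omega>)"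
        unfolding lin_est_def
      proof (rule sum.cong)
        fix i assume i: "i \<in> {1..n}"
        have "pmax (lsc t1 t2 X) i \<omega> = t1 + t2 * pmax X i \<omega>"
          by (rule pmax_lsc) (use t2 i in auto)
        then show "c i * pmax (lsc t1 t2 X) i \<omega> = c i * t1 + (c i * t2) * pmax X i \<omega>"
          by (simp add: algebra_simps)
      qed simp
    qed
    show ?thesis unfolding eq
    proof (rule sq_int_sum)
      fix i assume i: "i \<in> {1..n}"
      then have [measurable]: "pmax X i \<in> borel_measurable M" using Pi by auto
      have "integrable M (\<lambda>\<omega>. ((\<lambda>_. c i * t1) \<omega> + (c i * t2) * pmax X i \<omega>)\<^sup>2)"
        by (rule sq_int_add) (use Pi[of i] i in \<open>auto intro: sq_int_cmult\<close>)
      then show "(\<lambda>\<omega>. c i * t1 + c i * t2 * pmax X i \<omega>) \<in> borel_measurable M \<and>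
        integrable M (\<lambda>\<omega>. (c i * t1 + c i * t2 * pmax X i \<omega>)\<^sup>2)" by simp
    qed simp
  qed
  have part2: "(\<lambda>n. prob {\<omega> \<in> space M. \<bar>lin_est (C n) n t1 t2 X \<omega> - t2\<bar> > \<epsilon>}) \<longlonglongrightarrow> 0"
    if lim: "filterlim (\<lambda>N. \<Sum>k=1..N. (m k)\<^sup>2 / s2 k) at_top sequentially"
      and BL: "\<forall>n\<ge>2. BLUE2 X n (C n)" and t2: "0 < t2" and eps: "0 < \<epsilon>" for C t1 t2 \<epsilon>
  proof -
    have bound: "prob {\<omega> \<in> space M. \<bar>lin_est (C n) n t1 t2 X \<omega> - t2\<bar> > \<epsilon>} \<le> (t2\<^sup>2 / \<epsilon>\<^sup>2) / S n"
      if n2: "2 \<le> n" for n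
    proof -
      let ?L = "lin_est (C n) n t1 t2 X"
      have [measurable]: "?L \<in> borel_measurable M" and L2: "integrable M (\<lambda>\<omega>. (?L \<omega>)\<^sup>2)"
        using lsq[OF t2] by auto
      have EL: "expectation ?L = t2" using BL n2 t2 unfolding BLUE2_def unbiased2_def by auto
      have "prob {\<omega> \<in> space M. \<bar>?L \<omega> - t2\<bar> > \<epsilon>} \<le> prob {\<omega> \<in> space M. \<bar>?L \<omega> - expectation ?L\<bar> \<ge> \<epsilon>}"
        unfolding EL by (intro finite_measure_mono) auto
      also have "\<dots> \<le> variance ?L / \<epsilon>\<^sup>2"
        using L2 eps by (intro Chebyshev_inequality) (auto simp: power2_eq_square)
      also have "\<dots> \<le> (t2\<^sup>2 / S n) / \<epsilon>\<^sup>2"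
        using part1[OF n2 _ t2, of "C n" t1] BL n2 by (intro divide_right_mono) auto
      finally show ?thesis by (simp add: field_simps)
    qed
    have Slim: "filterlim (\<lambda>n. S n) at_top sequentially"
    proof -
      have "filterlim (\<lambda>n. (\<lambda>N. \<Sum>k=1..N. (m k)\<^sup>2 / s2 k) (n - 1)) at_top sequentially"
        by (rule filterlim_compose[OF lim filterlim_minus_const_nat_at_top])
      then show ?thesis by (simp add: S_def)
    qed
    have g0: "(\<lambda>n. (t2\<^sup>2 / \<epsilon>\<^sup>2) / S n) \<longlonglongrightarrow> 0"
      by (rule tendsto_divide_0[OF tendsto_const filterlim_at_top_imp_at_infinity[OF Slim]])
    show ?thesis
    proof (rule tendsto_sandwich[OF _ _ tendsto_const g0])
      show "\<forall>\<^sub>F n in sequentially. 0 \<le> prob {\<omega> \<in> space M. \<bar>lin_est (C n) n t1 t2 X \<omega> - t2\<bar> > \<epsilon>}"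
        by simp
      show "\<forall>\<^sub>F n in sequentially. prob {\<omega> \<in> space M. \<bar>lin_est (C n) n t1 t2 X \<omega> - t2\<bar> > \<epsilon>} \<le> (t2\<^sup>2 / \<epsilon>\<^sup>2) / S n"
        using bound by (intro eventually_sequentiallyI[of 2]) auto
    qed
  qed
  show ?thesis
    using part1 part2 unfolding S_def by blast
qed

end
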